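(* Suppose $G$ is a complete graph whose travel times satisfy the triangle inequality $t_{i,j}\le t_{i,k}+t_{k,j}$ for all distinct $i,j,k\in V$. Let $C_1,\dots,C_m$ be length-feasible cycles whose node sets cover $V$ (every node lies in at least one $C_r$). Then there exist $m'\le m$ length-feasible cycles whose node sets partition $V$; in particular the minimum number of length-feasible cycles needed to cover $V$ equals the minimum number needed to partition $V$.
   Context: $G=(V,E)$ is an undirected graph with critical times $q_i>0$ ($i\in V$) and travel times $t_{i,j}=t_{j,i}\ge 0$ ($\{i,j\}\in E$). A cycle is $C=(i_0,i_1,\dots,i_K)$ with $K\ge1$, $i_K=i_0$, $i_0,\dots,i_{K-1}$ distinct and $\{i_{k-1},i_k\}\in E$ for all $k$ when $K\ge2$; for $K=1$ it is the singleton cycle on node $i_0$, with travel time $0$. Its travel time is $t(C)=\sum_{k=1}^K t_{i_{k-1},i_k}$ (for $K\ge2$) and its minimum critical time is $q(C)=\min_{0\le k\le K}q_{i_k}$. $C$ is length-feasible if $t(C)\le q(C)$. *)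

theory Defs
  imports Complex_Main
begin

text \<open>A cycle (i_0,...,i_{K-1},i_0) is represented by the list [i_0,...,i_{K-1}] of its
  K distinct nodes; K = length of the list, and K = 1 is the singleton cycle.\<close>

definition is_cycle :: "'a set \<Rightarrow> 'a set set \<Rightarrow> 'a list \<Rightarrow> bool" where
  "is_cycle V E xs \<longleftrightarrow> xs \<noteq> [] \<and> distinct xs \<and> set xs \<subseteq> V \<and>
     (length xs \<ge> 2 \<longrightarrow>
        (\<forall>k < length xs. {xs ! k, xs ! ((k + 1) mod length xs)} \<in> E))"

definition cycle_time :: "('a \<Rightarrow> 'a \<Rightarrow> real) \<Rightarrow> 'a list \<Rightarrow> real" where
  "cycle_time t xs = (if length xs \<le> 1 then 0
     else (\<Sum>k < length xs. t (xs ! k) (xs ! ((k + 1) mod length xs))))"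

definition cycle_min_crit :: "('a \<Rightarrow> real) \<Rightarrow> 'a list \<Rightarrow> real" where
  "cycle_min_crit q xs = Min (q ` set xs)"

definition length_feasible ::
  "'a set \<Rightarrow> 'a set set \<Rightarrow> ('a \<Rightarrow> 'a \<Rightarrow> real) \<Rightarrow> ('a \<Rightarrow> real) \<Rightarrow> 'a list \<Rightarrow> bool" where
  "length_feasible V E t q xs \<longleftrightarrow> is_cycle V E xs \<and> cycle_time t xs \<le> cycle_min_crit q xs"

definition covers :: "'a set \<Rightarrow> 'a list list \<Rightarrow> bool" where
  "covers V Cs \<longleftrightarrow> (\<Union>C \<in> set Cs. set C) = V"

definition partitions :: "'a set \<Rightarrow> 'a list list \<Rightarrow> bool" where
  "partitions V Cs \<longleftrightarrow> covers V Cs \<and>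
     (\<forall>i < length Cs. \<forall>j < length Cs. i \<noteq> j \<longrightarrow> set (Cs ! i) \<inter> set (Cs ! j) = {})"

end

theory Submission
  imports Defs
begin

fun pl :: "('a \<Rightarrow> 'a \<Rightarrow> real) \<Rightarrow> 'a list \<Rightarrow> real" where
  "pl t (x#y#zs) = t x y + pl t (y#zs)"
| "pl t _ = 0"

lemma pl_snoc: "pl t (xs@[y]) = pl t xs + (if xs=[] then 0 else t (last xs) y)"
proof (induction t xs rule: pl.induct)
  case (1 t x y zs) then show ?case by simp
next
qed auto

lemma pl_sum: "pl t ys = (\<Sum>k < length ys - 1. t (ys!k) (ys!(k+1)))"
proof (induction t ys rule: pl.induct)
  case (1 t x y zs)
  have "(\<Sum>k < length (x#y#zs) - 1. t ((x#y#zs)!k) ((x#y#zs)!(k+1)))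
      = (\<Sum>k < Suc (length (y#zs) - 1). t ((x#y#zs)!k) ((x#y#zs)!(k+1)))" by simp
  also have "\<dots> = t x y + (\<Sum>k < length (y#zs) - 1. t ((y#zs)!k) ((y#zs)!(k+1)))"
    by (subst sum.lessThan_Suc_shift) simp
  finally show ?case using 1 by simp
qed auto

lemma ct_pl:
  assumes "length xs \<ge> 2"
  shows "cycle_time t xs = pl t (xs@[hd xs])"
proof -
  let ?n = "length xs"
  have "pl t (xs@[hd xs]) = (\<Sum>k < ?n. t ((xs@[hd xs])!k) ((xs@[hd xs])!(k+1)))"
    by (simp add: pl_sum)
  also have "\<dots> = (\<Sum>k < ?n. t (xs!k) (xs!((k+1) mod ?n)))"
  proof (rule sum.cong)
    fix k assume k: "k \<in> {..<?n}"
    show "t ((xs@[hd xs])!k) ((xs@[hd xs])!(k+1)) = t (xs!k) (xs!((k+1) mod ?n))"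
    proof (cases "k+1 < ?n")
      case True then show ?thesis using k by (simp add: nth_append)
    next
      case False
      then have "k+1 = ?n" using k by simp
      then show ?thesis using k assms by (cases xs) (auto simp: nth_append nth_Cons')
    qed
  qed simp
  finally show ?thesis using assms by (simp add: cycle_time_def)
qed

lemma ct_rot1:
  assumes "length xs \<ge> 2"
  shows "cycle_time t (rotate1 xs) = cycle_time t xs"
proof -
  obtain x ys where xs: "xs = x#ys" and ys: "ys \<noteq> []" using assms
    by (cases xs) fastforce+
  obtain y zs where yz: "ys = y#zs" using ys by (cases ys) auto
  have l: "length (ys@[x]) \<ge> 2" using ys by (cases ys) auto
  have "cycle_time t (rotate1 xs) = pl t ((ys@[x])@[y])"
    using ct_pl[OF l] xs yz by simp
  also have "\<dots> = pl t (ys@[x]) + t x y" by (subst pl_snoc) simp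
  also have "pl t (x#ys@[x]) = t x y + pl t (ys@[x])" using yz by simp
  ultimately show ?thesis using ct_pl[OF assms] xs by simp
qed

lemma ct_rot:
  assumes "length xs \<ge> 2"
  shows "cycle_time t (rotate n xs) = cycle_time t xs"
proof (induction n)
  case 0 then show ?case by simp
next
  case (Suc n)
  have "length (rotate n xs) \<ge> 2" using assms by simp
  then show ?case using Suc by (simp add: rotate_Suc ct_rot1)
qed

lemma ct_remove:
  assumes d: "distinct (us@v#ws)" and V: "set (us@v#ws) \<subseteq> V"
    and l: "length (us@v#ws) \<ge> 3"
    and triangle: "\<And>i j k. i \<in> V \<Longrightarrow> j \<in> V \<Longrightarrow> k \<in> V \<Longrightarrow>
                     i \<noteq> j \<Longrightarrow> i \<noteq> k \<Longrightarrow> j \<noteq> k \<Longrightarrow> t i j \<le> t i k + t k j"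
  shows "cycle_time t (us@ws) \<le> cycle_time t (us@v#ws)"
proof -
  define A where "A = ws@us"
  have lA: "length A \<ge> 2" using l by (simp add: A_def)
  have l2: "length (us@ws) \<ge> 2" using l by simp
  have l3: "length (us@v#ws) \<ge> 2" using l by simp
  have "cycle_time t (us@ws) = cycle_time t A"
    using ct_rot[OF l2, of t "length us"] by (simp add: A_def rotate_append)
  also have "\<dots> = pl t A + t (last A) (hd A)"
    using ct_pl[OF lA] lA pl_snoc[of t A "hd A"] by auto
  finally have e1: "cycle_time t (us@ws) = pl t A + t (last A) (hd A)" .
  have "rotate (length (us@[v])) ((us@[v])@ws) = ws@us@[v]" by (rule rotate_append)
  then have "cycle_time t (us@v#ws) = cycle_time t (A@[v])"
    using ct_rot[OF l3, of t "length (us@[v])"] by (simp add: A_def)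
  also have "\<dots> = pl t (A@[v]@[hd A])"
    using ct_pl[of "A@[v]"] lA by (cases A) auto
  also have "\<dots> = pl t A + t (last A) v + t v (hd A)"
    using lA pl_snoc[of t "A@[v]" "hd A"] pl_snoc[of t A v] by auto
  finally have e2: "cycle_time t (us@v#ws) = pl t A + t (last A) v + t v (hd A)" .
  have dA: "distinct A" and vA: "v \<notin> set A" using d by (auto simp: A_def)
  have AV: "set A \<subseteq> V" and vV: "v \<in> V" using V by (auto simp: A_def)
  have ne: "A \<noteq> []" using lA by auto
  have hl: "last A \<noteq> hd A"
  proof
    assume h: "last A = hd A"
    have "last A = A ! (length A - 1)" using ne by (simp add: last_conv_nth)
    moreover have "hd A = A ! 0" using ne by (simp add: hd_conv_nth)
    ultimately have "length A - 1 = 0" using h dA lA nth_eq_iff_index_eq by fastforce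
    then show False using lA by simp
  qed
  have "last A \<in> set A" "hd A \<in> set A" using ne by auto
  then have "t (last A) (hd A) \<le> t (last A) v + t v (hd A)"
    using triangle[of "last A" "hd A" v] AV vV vA hl by auto
  then show ?thesis using e1 e2 by simp
qed

lemma ct_filter:
  assumes "distinct xs" "set xs \<subseteq> V" "length (filter P xs) \<ge> 2"
    and triangle: "\<And>i j k. i \<in> V \<Longrightarrow> j \<in> V \<Longrightarrow> k \<in> V \<Longrightarrow>
                     i \<noteq> j \<Longrightarrow> i \<noteq> k \<Longrightarrow> j \<noteq> k \<Longrightarrow> t i j \<le> t i k + t k j"
  shows "cycle_time t (filter P xs) \<le> cycle_time t xs"
  using assms(1-3)
proof (induction "length xs - length (filter P xs)" arbitrary: xs rule: less_induct)
  case less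
  show ?case
  proof (cases "\<forall>x \<in> set xs. P x")
    case True then show ?thesis by simp
  next
    case False
    then obtain v where v: "v \<in> set xs" "\<not> P v" by auto
    then obtain us ws where xs: "xs = us@v#ws" by (meson split_list)
    have f: "filter P (us@ws) = filter P xs" using xs v by simp
    have "length (filter P xs) \<le> length (us@ws)"
      using f length_filter_le by metis
    then have l3: "length xs \<ge> 3" using less.prems xs by simp
    have lt: "length (us@ws) - length (filter P (us@ws)) < length xs - length (filter P xs)"
      using f xs \<open>length (filter P xs) \<le> length (us@ws)\<close> by simp
    have "cycle_time t (filter P (us@ws)) \<le> cycle_time t (us@ws)"
      using less.hyps[OF lt] less.prems xs f by auto
    also have "\<dots> \<le> cycle_time t xs"
      using ct_remove[of us v ws V t] less.prems l3 xs triangle by auto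
    finally show ?thesis using f by simp
  qed
qed

fun build :: "'a set \<Rightarrow> 'a list list \<Rightarrow> 'a list list" where
  "build S [] = []"
| "build S (C#Cs) = (if filter (\<lambda>x. x \<notin> S) C = [] then [] else [filter (\<lambda>x. x \<notin> S) C])
      @ build (S \<union> set C) Cs"

fun pdisj :: "'a list list \<Rightarrow> bool" where
  "pdisj [] = True"
| "pdisj (P#Ps) = (set P \<inter> (\<Union>Q\<in>set Ps. set Q) = {} \<and> pdisj Ps)"

lemma build_len: "length (build S Cs) \<le> length Cs"
  by (induction S Cs rule: build.induct) auto

lemma build_union: "(\<Union>P\<in>set (build S Cs). set P) = (\<Union>C\<in>set Cs. set C) - S"
  by (induction S Cs rule: build.induct) (auto simp: filter_empty_conv)

lemma build_elem: "P \<in> set (build S Cs) \<Longrightarrow> \<exists>C\<in>set Cs. \<exists>S'. P = filter (\<lambda>x. x \<notin> S') C \<and> P \<noteq> []"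
  by (induction S Cs rule: build.induct) (auto split: if_splits)

lemma build_pdisj: "pdisj (build S Cs)"
proof (induction S Cs rule: build.induct)
  case (2 S C Cs)
  have "(\<Union>P\<in>set (build (S \<union> set C) Cs). set P) \<inter> set C = {}"
    using build_union[of "S \<union> set C" Cs] by auto
  then show ?case using 2 by auto
qed simp

lemma pdisj_nth: "pdisj Ps \<Longrightarrow> i < length Ps \<Longrightarrow> j < length Ps \<Longrightarrow> i \<noteq> j
   \<Longrightarrow> set (Ps!i) \<inter> set (Ps!j) = {}"
proof (induction Ps arbitrary: i j)
  case (Cons P Ps)
  show ?case
  proof (cases i)
    case 0
    then obtain j' where "j = Suc j'" "j' < length Ps" using Cons by (cases j) auto
    moreover have "Ps ! j' \<in> set Ps" using \<open>j' < length Ps\<close> by simp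
    ultimately show ?thesis using Cons.prems(1) 0 nth_mem[of j' Ps] by (simp add: disjoint_iff)
  next
    case (Suc i')
    show ?thesis
    proof (cases j)
      case 0
      have m: "Ps ! i' \<in> set Ps" using Cons.prems(2) Suc by simp
      have "set P \<inter> (\<Union>Q\<in>set Ps. set Q) = {}" using Cons.prems(1) by simp
      then have "set P \<inter> set (Ps ! i') = {}" using m by blast
      then show ?thesis using 0 Suc by auto
    next
      case (Suc j') then show ?thesis using Cons \<open>i = Suc i'\<close> by auto
    qed
  qed
qed simp

lemma filter_feasible:
  assumes q_pos: "\<And>i. i \<in> V \<Longrightarrow> q i > 0"
    and complete: "E = {{i, j} | i j. i \<in> V \<and> j \<in> V \<and> i \<noteq> j}"
    and triangle: "\<And>i j k. i \<in> V \<Longrightarrow> j \<in> V \<Longrightarrow> k \<in> V \<Longrightarrow>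
                     i \<noteq> j \<Longrightarrow> i \<noteq> k \<Longrightarrow> j \<noteq> k \<Longrightarrow> t i j \<le> t i k + t k j"
    and f: "length_feasible V E t q C"
    and ne: "filter P C \<noteq> []"
  shows "length_feasible V E t q (filter P C)"
proof -
  let ?F = "filter P C"
  have cyc: "C \<noteq> []" "distinct C" "set C \<subseteq> V" and ft: "cycle_time t C \<le> cycle_min_crit q C"
    using f by (auto simp: length_feasible_def is_cycle_def)
  have dF: "distinct ?F" using cyc by simp
  have sF: "set ?F \<subseteq> V" using cyc by auto
  have isc: "is_cycle V E ?F"
    unfolding is_cycle_def
  proof (intro conjI impI allI)
    fix k assume l: "2 \<le> length ?F" and k: "k < length ?F"
    let ?k' = "(k+1) mod length ?F"
    have k': "?k' < length ?F" using k by (intro mod_less_divisor) auto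
    have "?k' \<noteq> k"
    proof (cases "k + 1 < length ?F")
      case True then show ?thesis by simp
    next
      case False then have "k+1 = length ?F" using k by simp
      then show ?thesis using l by simp
    qed
    then have "?F!k \<noteq> ?F!?k'" using dF k k' nth_eq_iff_index_eq by metis
    moreover have "?F!k \<in> V" "?F!?k' \<in> V" using sF k k' nth_mem by blast+
    ultimately show "{?F!k, ?F!?k'} \<in> E" unfolding complete by blast
  qed (use ne dF sF in auto)
  have mc: "cycle_min_crit q C \<le> cycle_min_crit q ?F"
    unfolding cycle_min_crit_def using ne by (intro Min_antimono) (auto simp: filter_empty_conv)
  have "cycle_time t ?F \<le> cycle_min_crit q ?F"
  proof (cases "length ?F \<ge> 2")
    case True
    have "cycle_time t ?F \<le> cycle_time t C" using ct_filter[of C V P t] cyc True triangle by blast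
    then show ?thesis using ft mc by simp
  next
    case False
    then have "cycle_time t ?F = 0" by (simp add: cycle_time_def)
    moreover have "0 < cycle_min_crit q ?F" unfolding cycle_min_crit_def
      using ne sF q_pos by (subst Min_gr_iff) (auto simp: filter_empty_conv)
    ultimately show ?thesis by simp
  qed
  then show ?thesis using isc by (simp add: length_feasible_def)
qed

lemma construct:
  assumes q_pos: "\<And>i. i \<in> V \<Longrightarrow> q i > 0"
    and complete: "E = {{i, j} | i j. i \<in> V \<and> j \<in> V \<and> i \<noteq> j}"
    and triangle: "\<And>i j k. i \<in> V \<Longrightarrow> j \<in> V \<Longrightarrow> k \<in> V \<Longrightarrow>
                     i \<noteq> j \<Longrightarrow> i \<noteq> k \<Longrightarrow> j \<noteq> k \<Longrightarrow> t i j \<le> t i k + t k j"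
    and feas: "\<forall>C \<in> set Cs. length_feasible V E t q C"
    and cov: "covers V Cs"
  shows "\<exists>Ps. length Ps \<le> length Cs \<and> (\<forall>P \<in> set Ps. length_feasible V E t q P)
                \<and> partitions V Ps"
proof (intro exI conjI)
  show "length (build {} Cs) \<le> length Cs" by (rule build_len)
  show "\<forall>P \<in> set (build {} Cs). length_feasible V E t q P"
  proof
    fix P assume "P \<in> set (build {} Cs)"
    then obtain C S' where "C \<in> set Cs" "P = filter (\<lambda>x. x \<notin> S') C" "P \<noteq> []"
      using build_elem by blast
    moreover have "length_feasible V E t q C" using feas \<open>C \<in> set Cs\<close> by blast
    ultimately show "length_feasible V E t q P"
      using filter_feasible[of V q E t C "\<lambda>x. x \<notin> S'"] q_pos complete triangle by blast
  qed
  show "partitions V (build {} Cs)"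
    unfolding partitions_def
  proof (intro conjI allI impI)
    show "covers V (build {} Cs)" using build_union[of "{}" Cs] cov
      unfolding covers_def by simp
    fix i j assume "i < length (build {} Cs)" "j < length (build {} Cs)" "i \<noteq> j"
    then show "set (build {} Cs ! i) \<inter> set (build {} Cs ! j) = {}"
      using pdisj_nth[OF build_pdisj] by blast
  qed
qed

theorem mainTheorem5:
  fixes V :: "'a set" and E :: "'a set set"
    and t :: "'a \<Rightarrow> 'a \<Rightarrow> real" and q :: "'a \<Rightarrow> real"
    and Cs :: "'a list list"
  assumes q_pos: "\<And>i. i \<in> V \<Longrightarrow> q i > 0"
    and t_nonneg: "\<And>i j. i \<in> V \<Longrightarrow> j \<in> V \<Longrightarrow> i \<noteq> j \<Longrightarrow> t i j \<ge> 0"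
    and t_sym: "\<And>i j. i \<in> V \<Longrightarrow> j \<in> V \<Longrightarrow> i \<noteq> j \<Longrightarrow> t i j = t j i"
    and complete: "E = {{i, j} | i j. i \<in> V \<and> j \<in> V \<and> i \<noteq> j}"
    and triangle: "\<And>i j k. i \<in> V \<Longrightarrow> j \<in> V \<Longrightarrow> k \<in> V \<Longrightarrow>
                     i \<noteq> j \<Longrightarrow> i \<noteq> k \<Longrightarrow> j \<noteq> k \<Longrightarrow> t i j \<le> t i k + t k j"
    and feas: "\<forall>C \<in> set Cs. length_feasible V E t q C"
    and cov: "covers V Cs"
  shows "(\<exists>Ps. length Ps \<le> length Cs \<and> (\<forall>P \<in> set Ps. length_feasible V E t q P)
                \<and> partitions V Ps)
         \<and> (LEAST m. \<exists>Ds. length Ds = m \<and> (\<forall>D \<in> set Ds. length_feasible V E t q D) \<and> covers V Ds)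
           = (LEAST m. \<exists>Ps. length Ps = m \<and> (\<forall>P \<in> set Ps. length_feasible V E t q P) \<and> partitions V Ps)"
proof
  show part: "\<exists>Ps. length Ps \<le> length Cs \<and> (\<forall>P \<in> set Ps. length_feasible V E t q P)
                \<and> partitions V Ps"
    by (rule construct[OF q_pos complete triangle feas cov])
  define Pc where "Pc = (\<lambda>m. \<exists>Ds. length Ds = m \<and> (\<forall>D \<in> set Ds. length_feasible V E t q D) \<and> covers V Ds)"
  define Pp where "Pp = (\<lambda>m. \<exists>Ps. length Ps = m \<and> (\<forall>P \<in> set Ps. length_feasible V E t q P) \<and> partitions V Ps)"
  have imp: "Pp m \<Longrightarrow> Pc m" for m unfolding Pp_def Pc_def partitions_def by blast
  have ex: "Pp (length Ps)" if "length Ps \<le> length Cs" "\<forall>P \<in> set Ps. length_feasible V E t q P"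
        "partitions V Ps" for Ps using that unfolding Pp_def by blast
  obtain Ps0 :: "'a list list" where "Pp (length Ps0)" using part ex by blast
  then have "Pp (Least Pp)" by (rule LeastI)
  then have "Pc (Least Pp)" by (rule imp)
  then have le1: "Least Pc \<le> Least Pp" by (rule Least_le)
  have "Pc (length Cs)" unfolding Pc_def using feas cov by blast
  then have "Pc (Least Pc)" by (rule LeastI)
  then obtain Ds where Ds: "length Ds = Least Pc" "\<forall>D \<in> set Ds. length_feasible V E t q D" "covers V Ds"
    unfolding Pc_def by blast
  obtain Ps where Ps: "length Ps \<le> length Ds" "\<forall>P \<in> set Ps. length_feasible V E t q P" "partitions V Ps"
    using construct[OF q_pos complete triangle Ds(2,3)] by blast
  have "Pp (length Ps)" using Ps unfolding Pp_def by blast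
  then have "Least Pp \<le> length Ps" by (rule Least_le)
  with Ps Ds le1 have "Least Pc = Least Pp" by simp
  then show "(LEAST m. \<exists>Ds. length Ds = m \<and> (\<forall>D \<in> set Ds. length_feasible V E t q D) \<and> covers V Ds)
           = (LEAST m. \<exists>Ps. length Ps = m \<and> (\<forall>P \<in> set Ps. length_feasible V E t q P) \<and> partitions V Ps)"
    unfolding Pc_def Pp_def .
qed

end
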